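(* Let $(\mathcal{L}\subset\mathbb{R}^s,\mathbb{R}^n)$ be a generic cut-and-project scheme, let $L\in\mathbb{R}^{s\times s}$ be a matrix associated to $\mathcal{L}$, and let $\Sigma(\Omega)\subset\mathbb{R}^n$ be a cut-and-project set constructed from this scheme. If $A:\mathbb{R}^n\to\mathbb{R}^n$ is a linear map with $A\Sigma(\Omega)\subset\Sigma(\Omega)$, then $A\pi_\parallel(\mathcal{L})\subset\pi_\parallel(\mathcal{L})$ and there exist uniquely defined matrices $C\in\mathbb{Z}^{s\times s}$ and $B\in\mathbb{R}^{(s-n)\times(s-n)}$ such that $\begin{pmatrix}A&O\\O&B\end{pmatrix}L=LC$.
   Context: A lattice $\mathcal{L}\subset\mathbb{R}^s$ is $\{L\mathbf{r}:\mathbf{r}\in\mathbb{Z}^s\}$ for a non-singular $L\in\mathbb{R}^{s\times s}$ (a matrix associated to $\mathcal{L}$). For $1\le n<s$, the cut-and-project scheme $(\mathcal{L}\subset\mathbb{R}^s,\mathbb{R}^n)$ consists of $\mathcal{L}$ with projections $\pi_\parallel(\mathbf{x})=(x_1,\dots,x_n)^\top$, $\pi_\perp(\mathbf{x})=(x_{n+1},\dots,x_s)^\top$; it is generic if $\pi_\parallel|_{\mathcal{L}}$ and $\pi_\perp|_{\mathcal{L}}$ are injective and $\pi_\perp(\mathcal{L})$ is dense in $\mathbb{R}^{s-n}$. For a bounded $\Omega\subset\mathbb{R}^{s-n}$ with $\overline{\Omega^\circ}=\overline{\Omega}\neq\emptyset$, the cut-and-project set is $\Sigma(\Omega)=\{\pi_\parallel(\mathbf{l}):\mathbf{l}\in\mathcal{L},\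 \pi_\perp(\mathbf{l})\in\Omega\}$. *)

theory Defs
  imports "HOL-Analysis.Analysis"
begin

text \<open>R^s is modelled as real^('n::finite + 'm::finite) with n = CARD('n) and s - n = CARD('m);
  coordinates Inl i are the first n coordinates, Inr j the last s - n.\<close>

definition int_vectors :: "(real ^ 'k) set" where
  "int_vectors = {r. \<forall>i. r $ i \<in> \<int>}"

definition lattice_of :: "real ^ 'k ^ 'k \<Rightarrow> (real ^ 'k) set" where
  "lattice_of L = {L *v r | r. r \<in> int_vectors}"

definition pi_par :: "real ^ ('n::finite + 'm::finite) \<Rightarrow> real ^ 'n" where
  "pi_par x = (\<chi> i. x $ Inl i)"

definition pi_perp :: "real ^ ('n::finite + 'm::finite) \<Rightarrow> real ^ 'm" where
  "pi_perp x = (\<chi> j. x $ Inr j)"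

definition generic_cps :: "real ^ ('n::finite + 'm::finite) ^ ('n + 'm) \<Rightarrow> bool" where
  "generic_cps L \<longleftrightarrow>
     invertible L \<and>
     inj_on (pi_par :: real ^ ('n::finite + 'm::finite) \<Rightarrow> real ^ 'n) (lattice_of L) \<and>
     inj_on (pi_perp :: real ^ ('n::finite + 'm::finite) \<Rightarrow> real ^ 'm) (lattice_of L) \<and>
     closure ((pi_perp :: real ^ ('n::finite + 'm::finite) \<Rightarrow> real ^ 'm) ` lattice_of L) = UNIV"

definition cps_set :: "real ^ ('n::finite + 'm::finite) ^ ('n + 'm) \<Rightarrow> (real ^ 'm) set \<Rightarrow> (real ^ 'n) set" where
  "cps_set L \<Omega> = {pi_par l | l. l \<in> lattice_of L \<and> pi_perp l \<in> \<Omega>}"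

definition block_diag :: "real ^ 'n ^ 'n \<Rightarrow> real ^ 'm ^ 'm \<Rightarrow> real ^ ('n::finite + 'm::finite) ^ ('n + 'm)" where
  "block_diag A B = (\<chi> i j. case i of
      Inl a \<Rightarrow> (case j of Inl b \<Rightarrow> A $ a $ b | Inr _ \<Rightarrow> 0)
    | Inr a \<Rightarrow> (case j of Inl _ \<Rightarrow> 0 | Inr b \<Rightarrow> B $ a $ b))"

end

theory Submission imports Defs begin

lemma chain:
  fixes p :: "real^'k \<Rightarrow> 'b::real_normed_vector" and S :: "(real^'k) set"
    and Q :: "nat \<Rightarrow> real^'k \<Rightarrow> bool"
  assumes lin: "linear p" and d: "\<delta> > 0"
    and dens: "\<And>y e. e > 0 \<Longrightarrow> \<exists>m\<in>S. norm (p m - y) < e"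
    and clos: "\<And>l m. l\<in>S \<Longrightarrow> m\<in>S \<Longrightarrow> l - 2 *\<^sub>R m \<in> S"
    and base: "\<And>l. l\<in>S \<Longrightarrow> norm (p l) < \<delta> \<Longrightarrow> Q 0 l"
    and step: "\<And>k l m. l\<in>S \<Longrightarrow> m\<in>S \<Longrightarrow> Q k m \<Longrightarrow> Q 0 (l - 2 *\<^sub>R m) \<Longrightarrow> Q (Suc k) l"
  shows "l\<in>S \<Longrightarrow> norm (p l) < \<delta> * (real k + 2) / 2 \<Longrightarrow> Q k l"
proof (induction k arbitrary: l)
  case 0
  then show ?case using base by simp
next
  case (Suc k)
  obtain m where m: "m \<in> S" "norm (p m - (1/2) *\<^sub>R p l) < \<delta>/4"
    using dens[of "\<delta>/4" "(1/2) *\<^sub>R p l"] d by auto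
  have "norm (p m) \<le> norm (p m - (1/2) *\<^sub>R p l) + norm ((1/2) *\<^sub>R p l)"
    by (metis norm_triangle_ineq diff_add_cancel)
  also have "\<dots> < \<delta>/4 + norm (p l) / 2" using m by simp
  also have "\<dots> \<le> \<delta> * (real k + 2) / 2" proof -
    have "0 \<le> \<delta> * real k" using d by simp
    then show ?thesis using Suc.prems by (simp add: field_simps)
  qed
  finally have "Q k m" using Suc.IH m by auto
  moreover have "Q 0 (l - 2 *\<^sub>R m)"
  proof (rule base)
    show "l - 2 *\<^sub>R m \<in> S" using clos Suc.prems m by auto
    have "p (l - 2 *\<^sub>R m) = (-2) *\<^sub>R (p m - (1/2) *\<^sub>R p l)"
      using lin by (simp add: linear_diff linear_scale algebra_simps)
    then have "norm (p (l - 2 *\<^sub>R m)) = 2 * norm (p m - (1/2) *\<^sub>R p l)" by simp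
    then show "norm (p (l - 2 *\<^sub>R m)) < \<delta>" using m d by simp
  qed
  ultimately show ?case using step Suc.prems m by blast
qed

lemma pi_par_add: "pi_par (x + y) = pi_par x + pi_par y"
  and pi_par_diff: "pi_par (x - y) = pi_par x - pi_par y"
  and pi_par_scale: "pi_par (a *\<^sub>R x) = a *\<^sub>R pi_par x"
  and pi_perp_add: "pi_perp (x + y) = pi_perp x + pi_perp y"
  and pi_perp_diff: "pi_perp (x - y) = pi_perp x - pi_perp y"
  and pi_perp_scale: "pi_perp (a *\<^sub>R x) = a *\<^sub>R pi_perp x"
  by (simp_all add: pi_par_def pi_perp_def vec_eq_iff)

lemma linear_pi_par: "linear pi_par"
  by (rule linearI) (simp_all add: pi_par_add pi_par_scale)

lemma linear_pi_perp: "linear pi_perp"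
  by (rule linearI) (simp_all add: pi_perp_add pi_perp_scale)

lemma par_perp_eq:
  fixes x y :: "real ^ ('n::finite + 'm::finite)"
  assumes "pi_par x = pi_par y" "pi_perp x = pi_perp y"
  shows "x = y"
unfolding vec_eq_iff
proof
  fix j :: "'n + 'm"
  show "x $ j = y $ j"
  proof (cases j)
    case (Inl a)
    then show ?thesis using assms(1) by (simp add: pi_par_def vec_eq_iff)
  next
    case (Inr b)
    then show ?thesis using assms(2) by (simp add: pi_perp_def vec_eq_iff)
  qed
qed

lemma int_add: "x \<in> int_vectors \<Longrightarrow> y \<in> int_vectors \<Longrightarrow> x + y \<in> int_vectors"
  and int_diff: "x \<in> int_vectors \<Longrightarrow> y \<in> int_vectors \<Longrightarrow> x - y \<in> int_vectors"
  and int_l2m: "x \<in> int_vectors \<Longrightarrow> y \<in> int_vectors \<Longrightarrow> x - 2 *\<^sub>R y \<in> int_vectors"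
  and int_p2m: "x \<in> int_vectors \<Longrightarrow> y \<in> int_vectors \<Longrightarrow> x + 2 *\<^sub>R y \<in> int_vectors"
  by (auto simp: int_vectors_def)

lemma int_axis: "axis k 1 \<in> int_vectors"
  by (simp add: int_vectors_def axis_def)

lemma int_mat:
  assumes "\<forall>i j. C $ i $ j \<in> \<int>" "z \<in> int_vectors"
  shows "C *v z \<in> int_vectors"
  using assms unfolding int_vectors_def matrix_vector_mult_def
  by (auto intro!: Ints_sum Ints_mult)

lemma lat_mem: "z \<in> int_vectors \<Longrightarrow> L *v z \<in> lattice_of L"
  by (auto simp: lattice_of_def)

lemma lat_eq: "lattice_of L = (\<lambda>z. L *v z) ` int_vectors"
  by (auto simp: lattice_of_def)

lemma sum_UNIV_plus:
  fixes f :: "('a::finite + 'b::finite) \<Rightarrow> 'c::comm_monoid_add"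
  shows "sum f UNIV = sum (\<lambda>a. f (Inl a)) UNIV + sum (\<lambda>b. f (Inr b)) UNIV"
proof -
  have "sum f (UNIV <+> UNIV) = sum (f \<circ> Inl) UNIV + sum (f \<circ> Inr) UNIV"
    by (rule sum.Plus) simp_all
  then show ?thesis by (simp add: comp_def)
qed

lemma bd_mult:
  fixes A :: "real^'n^'n" and B :: "real^'m^'m" and y :: "real^('n::finite+'m::finite)"
  shows "block_diag A B *v y = (\<chi> j. case j of Inl a \<Rightarrow> (A *v pi_par y) $ a | Inr b \<Rightarrow> (B *v pi_perp y) $ b)"
  unfolding vec_eq_iff
proof
  fix j :: "'n + 'm"
  show "(block_diag A B *v y) $ j = (\<chi> j. case j of Inl a \<Rightarrow> (A *v pi_par y) $ a | Inr b \<Rightarrow> (B *v pi_perp y) $ b) $ j"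
    by (cases j) (simp_all add: matrix_vector_mult_def block_diag_def pi_par_def pi_perp_def sum_UNIV_plus)
qed


lemma bd_par:
  fixes A :: "real^'n^'n" and B :: "real^'m^'m" and y :: "real^('n::finite+'m::finite)"
  shows "pi_par (block_diag A B *v y) = A *v pi_par y"
  by (simp add: bd_mult pi_par_def vec_eq_iff)

lemma bd_perp:
  fixes A :: "real^'n^'n" and B :: "real^'m^'m" and y :: "real^('n::finite+'m::finite)"
  shows "pi_perp (block_diag A B *v y) = B *v pi_perp y"
  by (simp add: bd_mult pi_perp_def vec_eq_iff)

theorem proposition2:
  fixes L :: "real ^ ('n::finite + 'm::finite) ^ ('n + 'm)"
    and \<Omega> :: "(real ^ 'm) set"
    and A :: "real ^ 'n ^ 'n"
  assumes generic: "generic_cps L"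
    and bdd: "bounded \<Omega>"
    and reg: "closure (interior \<Omega>) = closure \<Omega>"
    and ne: "closure \<Omega> \<noteq> {}"
    and inv: "(\<lambda>x. A *v x) ` cps_set L \<Omega> \<subseteq> cps_set L \<Omega>"
  shows "(\<lambda>x. A *v x) ` (pi_par ` lattice_of L) \<subseteq> pi_par ` lattice_of L
    \<and> (\<exists>C B. (\<forall>i j. C $ i $ j \<in> \<int>) \<and> block_diag A B ** L = L ** C
        \<and> (\<forall>C' B'. (\<forall>i j. C' $ i $ j \<in> \<int>) \<and> block_diag A B' ** L = L ** C'
                    \<longrightarrow> C' = C \<and> B' = B))"
proof -
  obtain Li where Li: "L ** Li = mat 1" "Li ** L = mat 1"
    using generic unfolding generic_cps_def invertible_def by blast
  have injpar: "inj_on (pi_par :: real ^ ('n + 'm) \<Rightarrow> real ^ 'n) (lattice_of L)"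
    using generic unfolding generic_cps_def by blast
  have injL: "L *v x = L *v y \<Longrightarrow> x = y" for x y
    by (metis Li(2) matrix_vector_mul_assoc matrix_vector_mul_lid)
  have dens: "\<exists>z\<in>int_vectors. norm (pi_perp (L *v z) - y) < e" if "e > 0" for y :: "real^'m" and e
  proof -
    have "y \<in> closure ((pi_perp :: real ^ ('n + 'm) \<Rightarrow> real ^ 'm) ` lattice_of L)"
      using generic unfolding generic_cps_def by blast
    then have ap: "\<forall>e>0. \<exists>x\<in>(pi_perp :: real ^ ('n + 'm) \<Rightarrow> real ^ 'm) ` lattice_of L. dist x y < e"
      by (simp only: closure_approachable)
    have "\<exists>x\<in>(pi_perp :: real ^ ('n + 'm) \<Rightarrow> real ^ 'm) ` lattice_of L. dist x y < e"
      by (rule ap[rule_format, OF that])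
    then obtain x where "x \<in> (pi_perp :: real ^ ('n + 'm) \<Rightarrow> real ^ 'm) ` lattice_of L" "dist x y < e"
      by (rule bexE)
    then show ?thesis by (auto simp: lattice_of_def dist_norm)
  qed
  have "interior \<Omega> \<noteq> {}" using reg ne by (metis closure_empty)
  then obtain c e0 where e0: "e0 > 0" "ball c e0 \<subseteq> \<Omega>"
    by (meson ex_in_conv mem_interior)
  define \<delta> where "\<delta> = e0 / 2"
  have d: "\<delta> > 0" using e0 by (simp add: \<delta>_def)
  obtain K\<Omega> where K\<Omega>: "\<And>x. x \<in> \<Omega> \<Longrightarrow> norm x \<le> K\<Omega>"
    using bdd unfolding bounded_iff by blast
  have K\<Omega>0: "K\<Omega> \<ge> 0"
    using K\<Omega>[of c] e0 by (meson centre_in_ball norm_ge_zero order_trans subsetD)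
  have inv': "\<exists>u\<in>int_vectors. pi_par (L *v u) = A *v pi_par (L *v z) \<and> pi_perp (L *v u) \<in> \<Omega>"
    if "z \<in> int_vectors" "pi_perp (L *v z) \<in> \<Omega>" for z
  proof -
    have "pi_par (L *v z) \<in> cps_set L \<Omega>"
      using that by (auto simp: cps_set_def lattice_of_def)
    then have "A *v pi_par (L *v z) \<in> cps_set L \<Omega>" using inv by blast
    then show ?thesis by (auto simp: cps_set_def lattice_of_def)
  qed
  have basept: "\<exists>y\<in>int_vectors. pi_perp (L *v y) \<in> \<Omega> \<and> pi_perp (L *v (y + z)) \<in> \<Omega>"
    if "norm (pi_perp (L *v z)) < \<delta>" for z
  proof -
    obtain y where y: "y \<in> int_vectors" "norm (pi_perp (L *v y) - c) < \<delta>"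
      using dens[OF d] by blast
    have "pi_perp (L *v y) \<in> ball c e0"
      using y d by (simp add: \<delta>_def dist_norm norm_minus_commute)
    moreover have "pi_perp (L *v (y + z)) \<in> ball c e0"
    proof -
      have "pi_perp (L *v (y + z)) - c = (pi_perp (L *v y) - c) + pi_perp (L *v z)"
        by (simp add: matrix_vector_right_distrib pi_perp_add)
      then have "norm (pi_perp (L *v (y + z)) - c) < \<delta> + \<delta>"
        using y that by (metis add_strict_mono norm_triangle_lt)
      then show ?thesis by (simp add: \<delta>_def dist_norm norm_minus_commute)
    qed
    ultimately show ?thesis using y e0 by blast
  qed
  have lin_perpL: "linear (\<lambda>z. pi_perp (L *v z))"
    by (rule linearI) (simp_all add: matrix_vector_right_distrib pi_perp_add matrix_vector_mult_scaleR pi_perp_scale)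
  have densp: "\<And>y e. e > 0 \<Longrightarrow> \<exists>m\<in>int_vectors. norm (pi_perp (L *v m) - y) < e"
    using dens by blast
  have P1: "\<exists>u\<in>int_vectors. pi_par (L *v u) = A *v pi_par (L *v z)" if z: "z \<in> int_vectors" for z
  proof -
    obtain k :: nat where k: "norm (pi_perp (L *v z)) * 2 / \<delta> < real k"
      using reals_Archimedean2 by blast
    have kb: "norm (pi_perp (L *v z)) < \<delta> * (real k + 2) / 2"
      using k d by (simp add: field_simps)
    have base: "\<exists>u\<in>int_vectors. pi_par (L *v u) = A *v pi_par (L *v l)"
      if l: "l \<in> int_vectors" "norm (pi_perp (L *v l)) < \<delta>" for l
    proof -
      obtain y where y: "y \<in> int_vectors" "pi_perp (L *v y) \<in> \<Omega>" "pi_perp (L *v (y + l)) \<in> \<Omega>"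
        using basept l by blast
      obtain u1 where u1: "u1 \<in> int_vectors" "pi_par (L *v u1) = A *v pi_par (L *v (y + l))"
        using inv'[OF int_add[OF y(1) l(1)] y(3)] by blast
      obtain u2 where u2: "u2 \<in> int_vectors" "pi_par (L *v u2) = A *v pi_par (L *v y)"
        using inv'[OF y(1) y(2)] by blast
      have "pi_par (L *v (u1 - u2)) = A *v pi_par (L *v l)"
        using u1 u2 by (simp add: matrix_vector_right_distrib pi_par_add pi_par_diff matrix_vector_mult_diff_distrib)
      then show "\<exists>u\<in>int_vectors. pi_par (L *v u) = A *v pi_par (L *v l)"
        using int_diff[OF u1(1) u2(1)] by blast
    qed
    have step: "\<exists>u\<in>int_vectors. pi_par (L *v u) = A *v pi_par (L *v l)"
      if lm: "l \<in> int_vectors" "m \<in> int_vectors"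
        and "\<exists>u\<in>int_vectors. pi_par (L *v u) = A *v pi_par (L *v m)"
        and "\<exists>u\<in>int_vectors. pi_par (L *v u) = A *v pi_par (L *v (l - 2 *\<^sub>R m))" for l m
    proof -
      from that obtain u1 u2 where u: "u1 \<in> int_vectors" "pi_par (L *v u1) = A *v pi_par (L *v m)"
        "u2 \<in> int_vectors" "pi_par (L *v u2) = A *v pi_par (L *v (l - 2 *\<^sub>R m))" by blast
      have "pi_par (L *v (u2 + 2 *\<^sub>R u1)) = A *v pi_par (L *v l)"
        using u by (simp add: matrix_vector_right_distrib matrix_vector_mult_diff_distrib pi_par_add pi_par_diff
            matrix_vector_mult_scaleR pi_par_scale algebra_simps)
      then show "\<exists>u\<in>int_vectors. pi_par (L *v u) = A *v pi_par (L *v l)"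
        using int_p2m[OF u(3) u(1)] by blast
    qed
    show ?thesis
      by (rule chain[where Q="\<lambda>k z. \<exists>u\<in>int_vectors. pi_par (L *v u) = A *v pi_par (L *v z)", OF lin_perpL d densp int_l2m base step z kb])
  qed
  have part1: "(\<lambda>x. A *v x) ` (pi_par ` lattice_of L) \<subseteq> pi_par ` lattice_of L"
  proof
    fix x assume "x \<in> (\<lambda>x. A *v x) ` (pi_par ` lattice_of L)"
    then obtain z where z: "z \<in> int_vectors" "x = A *v pi_par (L *v z)"
      unfolding lat_eq by blast
    then obtain u where "u \<in> int_vectors" "pi_par (L *v u) = x"
      using P1 by metis
    then show "x \<in> pi_par ` lattice_of L"
      unfolding lat_eq by blast
  qed
  have colex: "\<forall>k. \<exists>u\<in>int_vectors. pi_par (L *v u) = A *v pi_par (L *v axis k 1)"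
    using P1 int_axis by blast
  then obtain cf where cf: "\<And>k. cf k \<in> int_vectors" "\<And>k. pi_par (L *v cf k) = A *v pi_par (L *v axis k 1)"
    by metis
  define C where "C = (\<chi> i k. cf k $ i)"
  have Cint: "\<forall>i j. C $ i $ j \<in> \<int>" using cf(1) by (simp add: C_def int_vectors_def)
  have Caxis: "C *v axis k 1 = cf k" for k
    by (simp add: matrix_vector_mult_basis column_def C_def vec_eq_iff)
  have lin1: "linear (\<lambda>z. pi_par (L *v (C *v z)))"
    by (rule linearI) (simp_all add: matrix_vector_right_distrib pi_par_add matrix_vector_mult_scaleR pi_par_scale)
  have lin2: "linear (\<lambda>z. A *v pi_par (L *v z))"
    by (rule linearI) (simp_all add: matrix_vector_right_distrib pi_par_add matrix_vector_mult_scaleR pi_par_scale)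
  have Ceq: "(\<lambda>z. pi_par (L *v (C *v z))) = (\<lambda>z. A *v pi_par (L *v z))"
  proof (rule linear_eq_stdbasis[OF lin1 lin2])
    fix b :: "real^('n+'m)" assume "b \<in> Basis"
    then obtain k where "b = axis k 1" by (auto simp: Basis_vec_def)
    then show "pi_par (L *v (C *v b)) = A *v pi_par (L *v b)" using cf(2) Caxis by simp
  qed
  have Ctop: "pi_par (L *v (C *v z)) = A *v pi_par (L *v z)" for z
    using Ceq by metis
  define w where "w z = pi_perp (L *v (C *v z))" for z
  have lin_w: "linear w"
    unfolding w_def
    by (rule linearI) (simp_all add: matrix_vector_right_distrib pi_perp_add matrix_vector_mult_scaleR pi_perp_scale)
  have wadd: "w (a + b) = w a + w b" for a b using lin_w by (rule linear_add)
  have wdiff: "w (a - b) = w a - w b" for a b using lin_w by (rule linear_diff)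
  have wscale: "w (r *\<^sub>R a) = r *\<^sub>R w a" for r a using lin_w by (rule linear_scale)
  have F0: "w z \<in> \<Omega>" if zz: "z \<in> int_vectors" "pi_perp (L *v z) \<in> \<Omega>" for z
  proof -
    obtain u where u: "u \<in> int_vectors" "pi_par (L *v u) = A *v pi_par (L *v z)" "pi_perp (L *v u) \<in> \<Omega>"
      using inv'[OF zz] by blast
    have "L *v (C *v z) \<in> lattice_of L" "L *v u \<in> lattice_of L"
      using lat_mem int_mat[OF Cint zz(1)] u(1) by auto
    moreover have "pi_par (L *v (C *v z)) = pi_par (L *v u)" using Ctop u(2) by simp
    ultimately have "L *v (C *v z) = L *v u"
      using injpar unfolding inj_on_def by blast
    then show ?thesis using u by (simp add: w_def)
  qed
  have F1: "norm (w z) \<le> 2 * K\<Omega> * 3 ^ 0" if zz: "z \<in> int_vectors" "norm (pi_perp (L *v z)) < \<delta>" for z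
  proof -
    obtain y where y: "y \<in> int_vectors" "pi_perp (L *v y) \<in> \<Omega>" "pi_perp (L *v (y + z)) \<in> \<Omega>"
      using basept zz(2) by blast
    have "w z = w (y + z) - w y" by (simp add: wadd)
    moreover have "norm (w (y + z)) \<le> K\<Omega>" "norm (w y) \<le> K\<Omega>"
      using F0 K\<Omega> y int_add[OF y(1) zz(1)] by auto
    ultimately have "norm (w z) \<le> K\<Omega> + K\<Omega>"
      by (metis add_mono norm_triangle_ineq4 order_trans)
    then show ?thesis by simp
  qed
  have step2: "norm (w l) \<le> 2 * K\<Omega> * 3 ^ Suc k"
    if "l \<in> int_vectors" "m \<in> int_vectors" "norm (w m) \<le> 2 * K\<Omega> * 3 ^ k"
      "norm (w (l - 2 *\<^sub>R m)) \<le> 2 * K\<Omega> * 3 ^ 0" for k l m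
  proof -
    have "w l = w (l - 2 *\<^sub>R m) + 2 *\<^sub>R w m" by (simp add: wdiff wscale)
    then have "norm (w l) \<le> norm (w (l - 2 *\<^sub>R m)) + 2 * norm (w m)"
      by (metis norm_triangle_ineq norm_scaleR abs_numeral)
    also have "\<dots> \<le> 2 * K\<Omega> + 2 * (2 * K\<Omega> * 3 ^ k)" using that by simp
    also have "\<dots> \<le> 2 * K\<Omega> * 3 ^ Suc k"
    proof -
      have "(1::real) \<le> 3 ^ k" by simp
      then have "K\<Omega> * 1 \<le> K\<Omega> * 3 ^ k" using K\<Omega>0 by (rule mult_left_mono)
      then show ?thesis by simp
    qed
    finally show ?thesis .
  qed
  have F2: "norm (w z) \<le> 2 * K\<Omega> * 3 ^ k"
    if "z \<in> int_vectors" "norm (pi_perp (L *v z)) < \<delta> * (real k + 2) / 2" for z k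
    by (rule chain[where Q="\<lambda>k z. norm (w z) \<le> 2 * K\<Omega> * 3 ^ k", OF lin_perpL d densp int_l2m F1 step2 that])
  have Y0: "w z = 0" if z0: "pi_perp (L *v z) = 0" for z
  proof (rule ccontr)
    assume nz: "w z \<noteq> 0"
    obtain Kp where Kp: "Kp > 0" "\<And>x. norm (pi_perp (L *v x)) \<le> Kp * norm x"
      using linear_bounded_pos[OF lin_perpL] by blast
    obtain Kw where Kw: "Kw > 0" "\<And>x. norm (w x) \<le> Kw * norm x"
      using linear_bounded_pos[OF lin_w] by blast
    define D where "D = Kp * real CARD('n + 'm)"
    obtain k :: nat where k: "D * 2 / \<delta> < real k"
      using reals_Archimedean2 by blast
    have kD: "D < \<delta> * (real k + 2) / 2"
      using k d by (simp add: field_simps)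
    define K1 where "K1 = 2 * K\<Omega> * 3 ^ k + Kw * real CARD('n + 'm)"
    have bnd: "real N * norm (w z) \<le> K1" for N :: nat
    proof -
      define zN where "zN = (\<chi> i. (of_int \<lfloor>real N * z $ i\<rfloor> :: real))"
      define eN where "eN = real N *\<^sub>R z - zN"
      have zNi: "zN \<in> int_vectors" by (simp add: zN_def int_vectors_def)
      have eNb: "norm eN \<le> real CARD('n + 'm)"
      proof -
        have "norm eN \<le> sum (\<lambda>i. \<bar>eN $ i\<bar>) UNIV" by (rule norm_le_l1_cart)
        also have "\<dots> \<le> sum (\<lambda>i::'n+'m. 1::real) UNIV"
        proof (rule sum_mono)
          fix i
          have "of_int \<lfloor>real N * z $ i\<rfloor> \<le> real N * z $ i" "real N * z $ i < of_int \<lfloor>real N * z $ i\<rfloor> + 1"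
            by linarith+
          moreover have "eN $ i = real N * z $ i - of_int \<lfloor>real N * z $ i\<rfloor>"
            by (simp add: eN_def zN_def)
          ultimately show "\<bar>eN $ i\<bar> \<le> 1" unfolding abs_le_iff by linarith
        qed
        also have "\<dots> = real CARD('n + 'm)" by simp
        finally show ?thesis .
      qed
      have zNe: "zN = real N *\<^sub>R z - eN" by (simp add: eN_def)
      have "pi_perp (L *v zN) = - pi_perp (L *v eN)"
        unfolding zNe using z0
        by (simp add: matrix_vector_mult_diff_distrib matrix_vector_mult_scaleR pi_perp_diff pi_perp_scale)
      then have "norm (pi_perp (L *v zN)) \<le> Kp * norm eN" using Kp(2)[of eN] by simp
      also have "\<dots> \<le> D" unfolding D_def using eNb Kp(1) by (intro mult_left_mono) auto
      finally have b1: "norm (w zN) \<le> 2 * K\<Omega> * 3 ^ k" using F2[OF zNi] kD by simp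
      have b2: "norm (w eN) \<le> Kw * real CARD('n + 'm)"
        using Kw(2)[of eN] eNb Kw(1) by (meson mult_left_mono less_imp_le order_trans)
      have e3: "real N *\<^sub>R w z = w zN + w eN"
        by (simp add: eN_def wdiff wscale)
      have "real N * norm (w z) = norm (real N *\<^sub>R w z)" by simp
      also have "\<dots> = norm (w zN + w eN)" using e3 by simp
      also have "\<dots> \<le> norm (w zN) + norm (w eN)" by (rule norm_triangle_ineq)
      finally show ?thesis unfolding K1_def using b1 b2 by linarith
    qed
    have pos: "norm (w z) > 0" using nz by simp
    obtain N :: nat where N: "K1 / norm (w z) < real N"
      using reals_Archimedean2 by blast
    then have "K1 < real N * norm (w z)" using pos by (simp add: field_simps)
    then show False using bnd[of N] by simp
  qed
  define inr where "inr v = ((\<chi> j. case j of Inl _ \<Rightarrow> 0 | Inr b \<Rightarrow> v $ b) :: real^('n+'m))" for v :: "real^'m"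
  have perp_inr: "pi_perp (inr v) = v" for v by (simp add: inr_def pi_perp_def vec_eq_iff)
  have inr_add: "inr (a + b) = inr a + inr b" for a b
    by (auto simp: inr_def vec_eq_iff split: sum.splits)
  have inr_scale: "inr (r *\<^sub>R a) = r *\<^sub>R inr a" for r a
    by (auto simp: inr_def vec_eq_iff split: sum.splits)
  have lin_Bf: "linear (\<lambda>v. w (Li *v inr v))"
    by (rule linearI) (simp_all add: inr_add inr_scale matrix_vector_right_distrib matrix_vector_mult_scaleR wadd wscale)
  define B where "B = matrix (\<lambda>v. w (Li *v inr v))"
  have Bw: "B *v pi_perp (L *v z) = w z" for z
  proof -
    have "B *v pi_perp (L *v z) = w (Li *v inr (pi_perp (L *v z)))"
      unfolding B_def using matrix_vector_mul(2)[OF lin_Bf] by metis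
    moreover have "pi_perp (L *v (z - Li *v inr (pi_perp (L *v z)))) = 0"
    proof -
      have "L *v (Li *v v) = v" for v by (simp add: matrix_vector_mul_assoc Li(1))
      then show ?thesis by (simp add: matrix_vector_mult_diff_distrib pi_perp_diff perp_inr)
    qed
    ultimately show ?thesis using Y0 wdiff by (metis eq_iff_diff_eq_0)
  qed
  have eq: "block_diag A B ** L = L ** C"
    unfolding matrix_eq
  proof
    fix z
    show "(block_diag A B ** L) *v z = (L ** C) *v z"
      unfolding matrix_vector_mul_assoc[symmetric]
    proof (rule par_perp_eq)
      show "pi_par (block_diag A B *v (L *v z)) = pi_par (L *v (C *v z))"
        by (simp add: bd_par Ctop)
      show "pi_perp (block_diag A B *v (L *v z)) = pi_perp (L *v (C *v z))"
        by (simp add: bd_perp Bw w_def)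
    qed
  qed
  have uniq: "C' = C \<and> B' = B"
    if Cint': "\<forall>i j. C' $ i $ j \<in> \<int>" and eq': "block_diag A B' ** L = L ** C'" for C' B'
  proof -
    have top': "pi_par (L *v (C' *v z)) = A *v pi_par (L *v z)" for z
      using bd_par[of A B' "L *v z"] eq' by (metis matrix_vector_mul_assoc)
    have colk: "C' *v axis k 1 = C *v axis k 1" for k
    proof -
      have "L *v (C' *v axis k 1) \<in> lattice_of L" "L *v (C *v axis k 1) \<in> lattice_of L"
        using lat_mem int_mat[OF Cint' int_axis] int_mat[OF Cint int_axis] by auto
      moreover have "pi_par (L *v (C' *v axis k 1)) = pi_par (L *v (C *v axis k 1))"
        using top' Ctop by simp
      ultimately have "L *v (C' *v axis k 1) = L *v (C *v axis k 1)"
        using injpar unfolding inj_on_def by blast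
      then show ?thesis by (rule injL)
    qed
    have CC: "C' = C"
      using colk by (simp add: matrix_vector_mult_basis column_def vec_eq_iff) 
    have "block_diag A B' ** L = block_diag A B ** L" by (simp only: eq eq' CC)
    then have "(block_diag A B' ** L) ** Li = (block_diag A B ** L) ** Li" by simp
    then have bd: "block_diag A B' = block_diag A B" by (simp add: matrix_mul_assoc[symmetric] Li(1) matrix_mul_rid)
    have "B' = B"
      unfolding vec_eq_iff
    proof (intro allI)
      fix a b
      have "block_diag A B' $ Inr a $ Inr b = block_diag A B $ Inr a $ Inr b" using bd by simp
      then show "B' $ a $ b = B $ a $ b" by (simp add: block_diag_def)
    qed
    with CC show ?thesis by simp
  qed
  have ex: "\<exists>C B. (\<forall>i j. C $ i $ j \<in> \<int>) \<and> block_diag A B ** L = L ** C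
        \<and> (\<forall>C' B'. (\<forall>i j. C' $ i $ j \<in> \<int>) \<and> block_diag A B' ** L = L ** C'
                    \<longrightarrow> C' = C \<and> B' = B)"
    if "(\<forall>i j. C $ i $ j \<in> \<int>) \<and> block_diag A B ** L = L ** C
        \<and> (\<forall>C' B'. (\<forall>i j. C' $ i $ j \<in> \<int>) \<and> block_diag A B' ** L = L ** C'
                    \<longrightarrow> C' = C \<and> B' = B)" for C B
    using that by (rule exI[of _ B, THEN exI[of _ C]])
  have u2: "\<forall>C' B'. (\<forall>i j. C' $ i $ j \<in> \<int>) \<and> block_diag A B' ** L = L ** C'
                    \<longrightarrow> C' = C \<and> B' = B"
    using uniq by blast
  have all3: "(\<forall>i j. C $ i $ j \<in> \<int>) \<and> block_diag A B ** L = L ** C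
        \<and> (\<forall>C' B'. (\<forall>i j. C' $ i $ j \<in> \<int>) \<and> block_diag A B' ** L = L ** C'
                    \<longrightarrow> C' = C \<and> B' = B)"
    using Cint eq u2 by (intro conjI) assumption+
  show ?thesis by (rule conjI[OF part1 ex[OF all3]])
qed

end
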